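(* Let $n\geqslant 3$ and $k=n/2$. For a vertex $\pi$ of $P_n$ with $\pi_1=i$ and $\pi_n=j$ (so $i\neq j$), define $$f(\pi)=\begin{cases} i-j, & i>j,\\ n+i-j, & i<j,\end{cases}$$ and $$c(\pi)=f(\pi)+\varepsilon(\pi),$$ where $$\varepsilon(\pi)=\begin{cases} +1, & j>k \text{ and } f(\pi)=k,\\ -1, & j>k \text{ and } f(\pi)=k+1,\\ 0, & \text{otherwise}.\end{cases}$$ (For $n$ odd, $\varepsilon\equiv 0$.) Then $c$ is a proper vertex coloring of $P_n$ with values in $\{1,\ldots,n-1\}$. Moreover, it is equitable: each of the $n-1$ color classes has exactly $n\,(n-2)!$ vertices.
   Context: For $n\geqslant 1$, the Pancake graph $P_n$ is the Cayley graph on the symmetric group $\mathrm{Sym}_n$, with permutations written in one-line notation $\pi=[\pi_1\pi_2\ldots\pi_n]$. Its generating set consists of the prefix-reversals $r_i$, $2\leqslant i\leqslant n$. Multiplying $\pi$ on the right by $r_i$ reverses the first $i$ entries: $\pi r_i=[\pi_i\pi_{i-1}\ldots\pi_1\pi_{i+1}\ldots\pi_n]$. Two vertices $\pi,\sigma$ are adjacent iff $\sigma=\pi r_i$ for some $2\leqslant i\leqslant n$. A proper coloring is equitable if the sizes of any two color classes differ by at most one. *)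

theory Defs
  imports Complex_Main "HOL-Combinatorics.Multiset_Permutations"
begin

text \<open>Vertices of the Pancake graph P_n: permutations of {1..n} in one-line
notation, represented as lists.\<close>
definition pancake_vertices :: "nat \<Rightarrow> nat list set" where
  "pancake_vertices n = permutations_of_set {1..n}"

definition prefix_rev :: "nat \<Rightarrow> nat list \<Rightarrow> nat list" where
  "prefix_rev i p = rev (take i p) @ drop i p"

definition pancake_adj :: "nat \<Rightarrow> nat list \<Rightarrow> nat list \<Rightarrow> bool" where
  "pancake_adj n p q \<longleftrightarrow> (\<exists>i\<in>{2..n}. q = prefix_rev i p)"

definition pancake_k :: "nat \<Rightarrow> real" where
  "pancake_k n = real n / 2"

definition pancake_f :: "nat \<Rightarrow> nat list \<Rightarrow> int" where
  "pancake_f n p = (let i = int (hd p); j = int (last p) in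
      if i > j then i - j else int n + i - j)"

definition pancake_eps :: "nat \<Rightarrow> nat list \<Rightarrow> int" where
  "pancake_eps n p =
     (if real (last p) > pancake_k n \<and> real_of_int (pancake_f n p) = pancake_k n then 1
      else if real (last p) > pancake_k n \<and> real_of_int (pancake_f n p) = pancake_k n + 1 then -1
      else 0)"

definition pancake_c :: "nat \<Rightarrow> nat list \<Rightarrow> int" where
  "pancake_c n p = pancake_f n p + pancake_eps n p"

end

theory Submission
  imports Defs
begin

definition cc :: "int \<Rightarrow> int \<Rightarrow> int \<Rightarrow> int" where
  "cc n i j = (let f = (if i > j then i - j else n + i - j) in
     f + (if 2*j > n \<and> 2*f = n then 1 else if 2*j > n \<and> 2*f = n+2 then -1 else 0))"

lemma c_eq: "pancake_c n p = cc (int n) (int (hd p)) (int (last p))"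
proof -
  have a: "(real (last p) > real n / 2) = (2 * int (last p) > int n)" by linarith
  have b: "\<And>x::int. (real_of_int x = real n / 2) = (2 * x = int n)" by (simp add: field_simps) linarith
  have c: "\<And>x::int. (real_of_int x = real n / 2 + 1) = (2 * x = int n + 2)" by (simp add: field_simps) linarith
  show ?thesis
    unfolding pancake_c_def pancake_eps_def pancake_k_def cc_def Let_def
    by (simp only: a b c) (simp add: pancake_f_def Let_def)
qed

lemma L1: "3 \<le> n \<Longrightarrow> 1 \<le> i \<Longrightarrow> i \<le> n \<Longrightarrow> 1 \<le> j \<Longrightarrow> j \<le> n \<Longrightarrow> i \<noteq> j
  \<Longrightarrow> 1 \<le> cc n i j \<and> cc n i j \<le> n - 1"
  unfolding cc_def Let_def by (auto split: if_splits)

lemma L2: "1 \<le> i \<Longrightarrow> i \<le> n \<Longrightarrow> 1 \<le> i' \<Longrightarrow> i' \<le> n \<Longrightarrow> 1 \<le> j \<Longrightarrow> j \<le> n \<Longrightarrow> i \<noteq> j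
  \<Longrightarrow> i' \<noteq> j \<Longrightarrow> i \<noteq> i' \<Longrightarrow> cc n i j \<noteq> cc n i' j"
  unfolding cc_def Let_def by (auto split: if_splits)

lemma L3: "1 \<le> i \<Longrightarrow> i \<le> n \<Longrightarrow> 1 \<le> j \<Longrightarrow> j \<le> n \<Longrightarrow> i \<noteq> j
  \<Longrightarrow> cc n i j \<noteq> cc n j i"
  unfolding cc_def Let_def by (auto split: if_splits)

lemma L4: "3 \<le> n \<Longrightarrow> 1 \<le> j \<Longrightarrow> j \<le> n \<Longrightarrow> 1 \<le> m \<Longrightarrow> m \<le> n - 1 \<Longrightarrow>
  \<exists>i. 1 \<le> i \<and> i \<le> n \<and> i \<noteq> j \<and> cc n i j = m"
proof -
  assume h: "3 \<le> n" "1 \<le> j" "j \<le> n" "1 \<le> m" "m \<le> n - 1"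
  define m' where "m' = (if 2*j>n \<and> 2*m=n then m+1 else if 2*j>n \<and> 2*m=n+2 then m-1 else m)"
  define i where "i = (if j+m' \<le> n then j+m' else j+m'-n)"
  have "1 \<le> i \<and> i \<le> n \<and> i \<noteq> j \<and> cc n i j = m"
    using h unfolding i_def m'_def cc_def Let_def by (auto split: if_splits)
  then show ?thesis by blast
qed

lemma vert:
  assumes "p \<in> pancake_vertices n" "2 \<le> n"
  shows "set p = {1..n}" "distinct p" "length p = n" "hd p \<in> {1..n}" "last p \<in> {1..n}"
    "hd p \<noteq> last p"
proof -
  show s: "set p = {1..n}" and d: "distinct p"
    using assms by (auto simp: pancake_vertices_def permutations_of_set_def)
  show l: "length p = n" using distinct_card[OF d] s by simp
  then have ne: "p \<noteq> []" using assms by auto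
  show "hd p \<in> {1..n}" using ne s hd_in_set by blast
  show "last p \<in> {1..n}" using ne s last_in_set by blast
  have "hd p = p ! 0" using ne by (simp add: hd_conv_nth)
  moreover have "last p = p ! (n - 1)" using ne l by (simp add: last_conv_nth)
  ultimately show "hd p \<noteq> last p" using d l assms by (simp add: nth_eq_iff_index_eq)
qed

lemma count_hd_last:
  assumes "a \<in> A" "b \<in> A" "a \<noteq> b" "finite A"
  shows "card {p \<in> permutations_of_set A. hd p = a \<and> last p = b} = fact (card A - 2)"
proof -
  let ?g = "\<lambda>q. a # q @ [b]"
  have "bij_betw ?g (permutations_of_set (A - {a,b})) {p \<in> permutations_of_set A. hd p = a \<and> last p = b}"
  proof (rule bij_betw_imageI)
    show "inj_on ?g (permutations_of_set (A - {a, b}))" by (rule inj_onI) simp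
    show "?g ` permutations_of_set (A - {a, b}) = {p \<in> permutations_of_set A. hd p = a \<and> last p = b}"
    proof
      show "?g ` permutations_of_set (A - {a, b}) \<subseteq> {p \<in> permutations_of_set A. hd p = a \<and> last p = b}"
      proof
        fix p assume "p \<in> ?g ` permutations_of_set (A - {a, b})"
        then obtain q where q: "q \<in> permutations_of_set (A - {a, b})" and p: "p = ?g q" by blast
        have "set q = A - {a,b}" "distinct q" using q by (auto simp: permutations_of_set_def)
        then have "set p = A" "distinct p" using p assms by auto
        then show "p \<in> {p \<in> permutations_of_set A. hd p = a \<and> last p = b}"
          using p by (simp add: permutations_of_set_def)
      qed
    next
      show "{p \<in> permutations_of_set A. hd p = a \<and> last p = b} \<subseteq> ?g ` permutations_of_set (A - {a, b})"
      proof
        fix p assume p: "p \<in> {p \<in> permutations_of_set A. hd p = a \<and> last p = b}"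
        then have s: "set p = A" and d: "distinct p" and h: "hd p = a" and l: "last p = b"
          by (auto simp: permutations_of_set_def)
        have "p \<noteq> []" using s assms by auto
        then obtain t where t: "p = a # t" using h by (cases p) auto
        have "t \<noteq> []" using t l assms by auto
        moreover have "last t = b" using t l \<open>t \<noteq> []\<close> by simp
        ultimately have q: "t = butlast t @ [b]" by (metis append_butlast_last_id)
        define q where "q = butlast t"
        note q = q[folded q_def]
        have "set q = A - {a,b}" "distinct q" using s d t q assms by auto
        then have "q \<in> permutations_of_set (A - {a,b})"
          by (simp add: permutations_of_set_def)
        then show "p \<in> ?g ` permutations_of_set (A - {a, b})" using t q by blast
      qed
    qed
  qed
  then have "card {p \<in> permutations_of_set A. hd p = a \<and> last p = b} = card (permutations_of_set (A - {a,b}))"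
    by (rule bij_betw_same_card[symmetric])
  also have "\<dots> = fact (card (A - {a,b}))" using assms by simp
  also have "card (A - {a,b}) = card A - 2" using assms by (simp add: card_Diff_subset)
  finally show ?thesis .
qed

theorem theorem3:
  fixes n :: nat
  assumes "n \<ge> 3"
  shows "(\<forall>p\<in>pancake_vertices n. pancake_c n p \<in> {1..int n - 1})
    \<and> (\<forall>p\<in>pancake_vertices n. \<forall>q\<in>pancake_vertices n.
          pancake_adj n p q \<longrightarrow> pancake_c n p \<noteq> pancake_c n q)
    \<and> (\<forall>m\<in>{1..int n - 1}.
          card {p\<in>pancake_vertices n. pancake_c n p = m} = n * fact (n - 2))"
proof (intro conjI ballI impI)
  have n2: "2 \<le> n" using assms by simp
  note V = vert[OF _ n2]
  show "pancake_c n p \<in> {1..int n - 1}" if "p \<in> pancake_vertices n" for p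
  proof -
    have "1 \<le> int (hd p)" "int (hd p) \<le> int n" "1 \<le> int (last p)" "int (last p) \<le> int n"
         "int (hd p) \<noteq> int (last p)" using V[OF that] by auto
    from L1[OF _ this] assms show ?thesis by (simp add: c_eq)
  qed
  show "pancake_c n p \<noteq> pancake_c n q"
    if p: "p \<in> pancake_vertices n" and q: "q \<in> pancake_vertices n" and adj: "pancake_adj n p q" for p q
  proof -
    obtain i where i: "i \<in> {2..n}" and qd: "q = prefix_rev i p" using adj unfolding pancake_adj_def by blast
    have lp: "length p = n" and dp: "distinct p" using V[OF p] by auto
    have hp: "1 \<le> int (hd p)" "int (hd p) \<le> int n" "1 \<le> int (last p)" "int (last p) \<le> int n"
         "int (hd p) \<noteq> int (last p)" using V[OF p] by auto
    have hq: "1 \<le> int (hd q)" "int (hd q) \<le> int n" "1 \<le> int (last q)" "int (last q) \<le> int n"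
         using V[OF q] by auto
    show ?thesis
    proof (cases "i = n")
      case True
      then have "q = rev p" using qd lp by (simp add: prefix_rev_def)
      then have "hd q = last p" "last q = hd p" using lp n2
        by (auto simp: hd_rev last_rev)
      then show ?thesis using L3[OF hp] by (simp add: c_eq)
    next
      case False
      then have ilt: "i < n" using i by simp
      have dne: "drop i p \<noteq> []" using ilt lp by simp
      have lq: "last q = last p" using qd dne by (simp add: prefix_rev_def last_drop)
      have tne: "take i p \<noteq> []" using i lp by auto
      have "hd q = hd (rev (take i p))" using qd tne by (simp add: prefix_rev_def)
      also have "\<dots> = last (take i p)" by (simp add: hd_rev)
      also have "\<dots> = p ! (i - 1)" using tne i lp by (simp add: last_conv_nth)
      finally have hq1: "hd q = p ! (i - 1)" .
      have "hd p = p ! 0" using lp n2 by (cases p) auto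
      then have "hd q \<noteq> hd p" using hq1 dp lp i ilt by (simp add: nth_eq_iff_index_eq)
      have "hd q \<noteq> last q" using V[OF q] by simp
      show ?thesis
        using L2[of "int (hd q)" "int n" "int (hd p)" "int (last p)"] hq hp
          \<open>hd q \<noteq> hd p\<close> \<open>hd q \<noteq> last q\<close> lq by (simp add: c_eq)
    qed
  qed
  fix m assume m: "m \<in> {1..int n - 1}"
  define h where "h j = nat (SOME i. 1 \<le> i \<and> i \<le> int n \<and> i \<noteq> int j \<and> cc (int n) i (int j) = m)" for j
  have hprop: "1 \<le> h j \<and> h j \<le> n \<and> h j \<noteq> j \<and> cc (int n) (int (h j)) (int j) = m"
    if "j \<in> {1..n}" for j
  proof -
    have "\<exists>i. 1 \<le> i \<and> i \<le> int n \<and> i \<noteq> int j \<and> cc (int n) i (int j) = m"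
      using L4[of "int n" "int j" m] assms that m by auto
    from someI_ex[OF this] show ?thesis unfolding h_def by auto
  qed
  let ?V = "pancake_vertices n"
  let ?A = "\<lambda>j. {p \<in> permutations_of_set {1..n}. hd p = h j \<and> last p = j}"
  have eq: "{p\<in>?V. pancake_c n p = m} = (\<Union>j\<in>{1..n}. ?A j)"
  proof (rule set_eqI, rule iffI)
    fix p assume "p \<in> {p\<in>?V. pancake_c n p = m}"
    then have p: "p \<in> ?V" and c: "cc (int n) (int (hd p)) (int (last p)) = m" by (auto simp: c_eq)
    have hp: "1 \<le> int (hd p)" "int (hd p) \<le> int n" "1 \<le> int (last p)" "int (last p) \<le> int n"
         "int (hd p) \<noteq> int (last p)" and lj: "last p \<in> {1..n}" using V[OF p] by auto
    have "hd p = h (last p)"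
    proof (rule ccontr)
      assume ne: "hd p \<noteq> h (last p)"
      have "cc (int n) (int (hd p)) (int (last p)) \<noteq> cc (int n) (int (h (last p))) (int (last p))"
        using L2[of "int (hd p)" "int n" "int (h (last p))" "int (last p)"] hp hprop[OF lj] ne by auto
      then show False using c hprop[OF lj] by simp
    qed
    then show "p \<in> (\<Union>j\<in>{1..n}. ?A j)" using p lj unfolding pancake_vertices_def by blast
  next
    fix p assume "p \<in> (\<Union>j\<in>{1..n}. ?A j)"
    then obtain j where j: "j \<in> {1..n}" and p: "p \<in> permutations_of_set {1..n}"
      and e: "hd p = h j" "last p = j" by blast
    show "p \<in> {p\<in>?V. pancake_c n p = m}"
      using p e hprop[OF j] unfolding pancake_vertices_def by (simp add: c_eq)
  qed
  have "card (\<Union>j\<in>{1..n}. ?A j) = (\<Sum>j\<in>{1..n}. card (?A j))"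
    by (rule card_UN_disjoint) auto
  also have "\<dots> = (\<Sum>j\<in>{1..n}. fact (n - 2))"
  proof (rule sum.cong[OF refl])
    fix j assume j: "j \<in> {1..n}"
    show "card (?A j) = fact (n - 2)"
      using count_hd_last[of "h j" "{1..n}" j] hprop[OF j] j by auto
  qed
  also have "\<dots> = n * fact (n - 2)" by simp
  finally show "card {p\<in>?V. pancake_c n p = m} = n * fact (n - 2)" using eq by simp
qed

end
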